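(* Let $k\ge 3$, let $C_{2k}=v_1v_2\cdots v_{2k}v_1$ be a cycle, let $i,j$ be integers with $4<i<j\le 2k$, and let $n_i,n_j\ge 0$ be integers. Let $G$ be the graph on $n=2k+n_i+n_j$ vertices obtained from $C_{2k}$ and two stars $S_{n_i+1}$, $S_{n_j+1}$ by identifying $v_i$ with the center of $S_{n_i+1}$ and $v_j$ with the center of $S_{n_j+1}$ (i.e. attaching $n_i$ pendant vertices at $v_i$ and $n_j$ pendant vertices at $v_j$). Let $G'=G-v_1v_2+v_1v_4$. Then $$\operatorname{per} L(G)>\operatorname{per} L(G').$$
   Context: For a simple graph $G$, $L(G)=D(G)-A(G)$ is its Laplacian matrix, where $D(G)$ is the diagonal matrix of vertex degrees and $A(G)$ the adjacency matrix. The permanent of an $n\times n$ matrix $X=(x_{ij})$ is $\operatorname{per} X=\sum_{\sigma\in S_n}\prod_{t=1}^n x_{t\sigma(t)}$. $S_m$ denotes the star on $m$ vertices (so $S_1$ is a single vertex). $G-e$ / $G+e$ denote deletion / addition of an edge $e$. *)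

theory Defs
  imports "HOL-Combinatorics.Permutations"
begin

text \<open>Simple graphs are given by a vertex set V (a finite set of naturals) and an
edge set E of two-element subsets of V.\<close>

definition laplacian :: "nat set set \<Rightarrow> nat \<Rightarrow> nat \<Rightarrow> int" where
  "laplacian E a b =
     (if a = b then int (card {e \<in> E. a \<in> e})
      else if {a, b} \<in> E then -1 else 0)"

definition per :: "nat set \<Rightarrow> (nat \<Rightarrow> nat \<Rightarrow> int) \<Rightarrow> int" where
  "per V X = (\<Sum>\<sigma> | \<sigma> permutes V. \<Prod>t\<in>V. X t (\<sigma> t))"

text \<open>The cycle C_{2k} = v_1 v_2 ... v_{2k} v_1 with v_a represented by the natural a.\<close>
definition cycle_edges :: "nat \<Rightarrow> nat set set" where
  "cycle_edges k = {{a, a + 1} | a. 1 \<le> a \<and> a < 2 * k} \<union> {{2 * k, 1}}"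

text \<open>n_i pendant vertices 2k+1..2k+n_i at v_i, and n_j pendant vertices
2k+n_i+1..2k+n_i+n_j at v_j.\<close>
definition G_edges :: "nat \<Rightarrow> nat \<Rightarrow> nat \<Rightarrow> nat \<Rightarrow> nat \<Rightarrow> nat set set" where
  "G_edges k i j ni nj = cycle_edges k
     \<union> {{i, 2 * k + t} | t. 1 \<le> t \<and> t \<le> ni}
     \<union> {{j, 2 * k + ni + t} | t. 1 \<le> t \<and> t \<le> nj}"

definition G_vertices :: "nat \<Rightarrow> nat \<Rightarrow> nat \<Rightarrow> nat set" where
  "G_vertices k ni nj = {1 .. 2 * k + ni + nj}"

end

theory Submission
  imports Defs
begin


definition cls :: "nat set \<Rightarrow> nat set \<Rightarrow> (nat \<Rightarrow> nat) \<Rightarrow> (nat \<Rightarrow> nat) set" where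
  "cls S C \<rho> = {\<sigma>. \<sigma> permutes S \<and> (\<forall>c\<in>C. \<sigma> c = \<rho> c)}"

lemma sum_cls:
  fixes X :: "nat \<Rightarrow> nat \<Rightarrow> int"
  assumes fin: "finite S" and CS: "C \<subseteq> S" and rho: "\<rho> permutes C"
  shows "(\<Sum>\<sigma>\<in>cls S C \<rho>. \<Prod>t\<in>S. X t (\<sigma> t)) = (\<Prod>c\<in>C. X c (\<rho> c)) * per (S - C) X"
proof -
  define i where "i = (\<lambda>\<tau> x. if x \<in> C then \<rho> x else (\<tau>::nat\<Rightarrow>nat) x)"
  define j where "j = (\<lambda>\<sigma> x. if x \<in> C then x else (\<sigma>::nat\<Rightarrow>nat) x)"
  have rhoS: "\<rho> permutes S" using permutes_subset[OF rho CS] .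
  have rhoC: "\<And>x. x \<in> C \<Longrightarrow> \<rho> x \<in> C" using permutes_in_image[OF rho] by simp
  have rhoout: "\<And>x. x \<notin> C \<Longrightarrow> \<rho> x = x" using permutes_not_in[OF rho] by simp
  have "(\<Sum>\<sigma>\<in>cls S C \<rho>. \<Prod>t\<in>S. X t (\<sigma> t)) = (\<Sum>\<tau>\<in>{\<tau>. \<tau> permutes (S - C)}. \<Prod>t\<in>S. X t (i \<tau> t))"
  proof (rule sum.reindex_bij_witness[where i=i and j=j])
    fix \<sigma> assume "\<sigma> \<in> cls S C \<rho>"
    then have s: "\<sigma> permutes S" "\<And>c. c \<in> C \<Longrightarrow> \<sigma> c = \<rho> c" by (auto simp: cls_def)
    show "i (j \<sigma>) = \<sigma>" using s by (auto simp: i_def j_def fun_eq_iff)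
    have eq: "j \<sigma> = \<sigma> \<circ> inv \<rho>"
    proof
      fix x show "j \<sigma> x = (\<sigma> \<circ> inv \<rho>) x"
      proof (cases "x \<in> C")
        case True
        then have "inv \<rho> x \<in> C" using permutes_in_image[OF permutes_inv[OF rho]] by simp
        then show ?thesis using True s(2) permutes_inverses[OF rho] by (simp add: j_def)
      next
        case False
        then have "inv \<rho> x = x" using permutes_not_in[OF permutes_inv[OF rho]] by simp
        then show ?thesis using False by (simp add: j_def)
      qed
    qed
    have "j \<sigma> permutes S" unfolding eq
      by (rule permutes_compose[OF permutes_inv[OF rhoS] s(1)])
    then have "j \<sigma> permutes (S - C)"
      by (rule permutes_superset) (simp add: j_def)
    then show "j \<sigma> \<in> {\<tau>. \<tau> permutes (S - C)}" by simp
    show "(\<Prod>t\<in>S. X t (i (j \<sigma>) t)) = (\<Prod>t\<in>S. X t (\<sigma> t))"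
      using \<open>i (j \<sigma>) = \<sigma>\<close> by simp
  next
    fix \<tau> assume "\<tau> \<in> {\<tau>. \<tau> permutes (S - C)}"
    then have t: "\<tau> permutes (S - C)" by simp
    then have tS: "\<tau> permutes S" by (rule permutes_subset) auto
    show "j (i \<tau>) = \<tau>"
    proof
      fix x show "j (i \<tau>) x = \<tau> x"
        using t permutes_not_in[OF t, of x] by (auto simp: i_def j_def)
    qed
    have eq: "i \<tau> = \<tau> \<circ> \<rho>"
    proof
      fix x show "i \<tau> x = (\<tau> \<circ> \<rho>) x"
        using rhoC[of x] rhoout[of x] permutes_not_in[OF t, of "\<rho> x"] by (auto simp: i_def)
    qed
    have "i \<tau> permutes S" unfolding eq by (rule permutes_compose[OF rhoS tS])
    then show "i \<tau> \<in> cls S C \<rho>" by (auto simp: cls_def i_def)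
  qed
  also have "\<dots> = (\<Sum>\<tau>\<in>{\<tau>. \<tau> permutes (S - C)}. (\<Prod>c\<in>C. X c (\<rho> c)) * (\<Prod>t\<in>S - C. X t (\<tau> t)))"
  proof (rule sum.cong[OF refl])
    fix \<tau> assume "\<tau> \<in> {\<tau>. \<tau> permutes (S - C)}"
    have "(\<Prod>t\<in>S. X t (i \<tau> t)) = (\<Prod>t\<in>S - C. X t (i \<tau> t)) * (\<Prod>t\<in>C. X t (i \<tau> t))"
      using prod.subset_diff[OF CS fin] by simp
    also have "\<dots> = (\<Prod>t\<in>S - C. X t (\<tau> t)) * (\<Prod>c\<in>C. X c (\<rho> c))"
      by (auto simp: i_def intro!: arg_cong2[where f="(*)"] prod.cong)
    finally show "(\<Prod>t\<in>S. X t (i \<tau> t)) = (\<Prod>c\<in>C. X c (\<rho> c)) * (\<Prod>t\<in>S - C. X t (\<tau> t))"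
      by simp
  qed
  also have "\<dots> = (\<Prod>c\<in>C. X c (\<rho> c)) * per (S - C) X"
    by (simp add: per_def sum_distrib_left)
  finally show ?thesis .
qed

lemma per_empty [simp]: "per {} X = 1"
  by (simp add: per_def)

lemma per_cong:
  assumes "\<And>a b. a \<in> S \<Longrightarrow> b \<in> S \<Longrightarrow> X a b = Y a b"
  shows "per S X = per S Y"
  unfolding per_def
proof (rule sum.cong[OF refl])
  fix \<sigma> assume "\<sigma> \<in> {\<sigma>. \<sigma> permutes S}"
  then have p: "\<sigma> permutes S" by simp
  show "(\<Prod>t\<in>S. X t (\<sigma> t)) = (\<Prod>t\<in>S. Y t (\<sigma> t))"
    by (rule prod.cong[OF refl]) (simp add: assms permutes_in_image[OF p])
qed

lemma sum_split:
  assumes "finite A"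
  shows "sum f A = sum f {x\<in>A. Q x} + sum f {x\<in>A. \<not> Q x}"
proof -
  have "A = {x\<in>A. Q x} \<union> {x\<in>A. \<not> Q x}" by auto
  then have "sum f A = sum f ({x\<in>A. Q x} \<union> {x\<in>A. \<not> Q x})" by simp
  also have "\<dots> = sum f {x\<in>A. Q x} + sum f {x\<in>A. \<not> Q x}"
    by (rule sum.union_disjoint) (use assms in auto)
  finally show ?thesis .
qed

lemma prod_nonneg_bip:
  fixes X :: "nat \<Rightarrow> nat \<Rightarrow> int" and col :: "nat \<Rightarrow> bool"
  assumes fin: "finite S" and p: "\<sigma> permutes S"
    and diag: "\<And>a. 0 \<le> X a a"
    and off: "\<And>a b. a \<noteq> b \<Longrightarrow> X a b \<le> 0"
    and bip: "\<And>a b. a \<noteq> b \<Longrightarrow> X a b \<noteq> 0 \<Longrightarrow> col a \<noteq> col b"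
  shows "0 \<le> (\<Prod>t\<in>S. X t (\<sigma> t))"
proof (cases "\<exists>t\<in>S. X t (\<sigma> t) = 0")
  case True
  then have "(\<Prod>t\<in>S. X t (\<sigma> t)) = 0" using fin by (simp add: prod_zero_iff)
  then show ?thesis by simp
next
  case False
  define F where "F = {t\<in>S. \<sigma> t = t}"
  define N0 where "N0 = {t\<in>S. \<sigma> t \<noteq> t \<and> col t}"
  define N1 where "N1 = {t\<in>S. \<sigma> t \<noteq> t \<and> \<not> col t}"
  have SU: "S = F \<union> (N0 \<union> N1)" by (auto simp: F_def N0_def N1_def)
  have fins: "finite F" "finite N0" "finite N1" using fin by (auto simp: F_def N0_def N1_def)
  have inj: "inj \<sigma>" using permutes_inj[OF p] .
  have bij: "bij_betw \<sigma> N0 N1"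
  proof (rule bij_betw_imageI)
    show "inj_on \<sigma> N0" using inj by (rule inj_on_subset) simp
    show "\<sigma> ` N0 = N1"
    proof
      show "\<sigma> ` N0 \<subseteq> N1"
      proof
        fix y assume "y \<in> \<sigma> ` N0"
        then obtain t where t: "t \<in> N0" "y = \<sigma> t" by auto
        have tS: "t \<in> S" "\<sigma> t \<noteq> t" "col t" using t by (auto simp: N0_def)
        have "X t (\<sigma> t) \<noteq> 0" using False tS by auto
        then have "col t \<noteq> col (\<sigma> t)" using bip[of t "\<sigma> t"] tS(2) by simp
        moreover have "\<sigma> (\<sigma> t) \<noteq> \<sigma> t" using tS(2) by (simp add: inj_eq[OF inj])
        moreover have "\<sigma> t \<in> S" using tS permutes_in_image[OF p] by simp
        ultimately show "y \<in> N1" using t tS by (auto simp: N1_def)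
      qed
      show "N1 \<subseteq> \<sigma> ` N0"
      proof
        fix y assume y: "y \<in> N1"
        define t where "t = inv \<sigma> y"
        have st: "\<sigma> t = y" using permutes_inverses[OF p] by (simp add: t_def)
        have yS: "y \<in> S" "\<sigma> y \<noteq> y" "\<not> col y" using y by (auto simp: N1_def)
        have tS: "t \<in> S" using permutes_in_image[OF p, of t] st yS by simp
        have tne: "\<sigma> t \<noteq> t" using st yS by auto
        have "X t (\<sigma> t) \<noteq> 0" using False tS by auto
        then have "col t \<noteq> col y" using bip[of t "\<sigma> t"] tne st by simp
        then have "t \<in> N0" using tS tne yS by (auto simp: N0_def)
        then show "y \<in> \<sigma> ` N0" using st by blast
      qed
    qed
  qed
  have d: "F \<inter> (N0 \<union> N1) = {}" "N0 \<inter> N1 = {}" by (auto simp: F_def N0_def N1_def)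
  have "(\<Prod>t\<in>S. X t (\<sigma> t)) = (\<Prod>t\<in>F. X t (\<sigma> t)) * ((\<Prod>t\<in>N0. X t (\<sigma> t)) * (\<Prod>t\<in>N1. X t (\<sigma> t)))"
    unfolding SU using fins d by (simp add: prod.union_disjoint)
  also have "(\<Prod>t\<in>N1. X t (\<sigma> t)) = (\<Prod>t\<in>N0. X (\<sigma> t) (\<sigma> (\<sigma> t)))"
    using prod.reindex_bij_betw[OF bij, of "\<lambda>t. X t (\<sigma> t)"] by simp
  also have "(\<Prod>t\<in>N0. X t (\<sigma> t)) * (\<Prod>t\<in>N0. X (\<sigma> t) (\<sigma> (\<sigma> t))) = (\<Prod>t\<in>N0. X t (\<sigma> t) * X (\<sigma> t) (\<sigma> (\<sigma> t)))"
    by (simp add: prod.distrib)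
  finally have eq: "(\<Prod>t\<in>S. X t (\<sigma> t)) = (\<Prod>t\<in>F. X t (\<sigma> t)) * (\<Prod>t\<in>N0. X t (\<sigma> t) * X (\<sigma> t) (\<sigma> (\<sigma> t)))" .
  have "0 \<le> (\<Prod>t\<in>F. X t (\<sigma> t))"
    by (rule prod_nonneg) (auto simp: F_def diag)
  moreover have "0 \<le> (\<Prod>t\<in>N0. X t (\<sigma> t) * X (\<sigma> t) (\<sigma> (\<sigma> t)))"
  proof (rule prod_nonneg)
    fix t assume t: "t \<in> N0"
    then have a: "\<sigma> t \<noteq> t" by (auto simp: N0_def)
    moreover have "\<sigma> (\<sigma> t) \<noteq> \<sigma> t" using a by (simp add: inj_eq[OF inj])
    ultimately show "0 \<le> X t (\<sigma> t) * X (\<sigma> t) (\<sigma> (\<sigma> t))"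
      using off by (simp add: mult_nonpos_nonpos)
  qed
  ultimately show ?thesis unfolding eq by simp
qed

lemma sum_le_per:
  fixes X :: "nat \<Rightarrow> nat \<Rightarrow> int"
  assumes fin: "finite S" and nn: "\<And>\<sigma>. \<sigma> permutes S \<Longrightarrow> 0 \<le> (\<Prod>t\<in>S. X t (\<sigma> t))"
    and A: "A \<subseteq> {\<sigma>. \<sigma> permutes S}"
  shows "(\<Sum>\<sigma>\<in>A. \<Prod>t\<in>S. X t (\<sigma> t)) \<le> per S X"
  unfolding per_def
  by (rule sum_mono2[OF finite_permutations[OF fin] A]) (use nn in auto)

lemma cls_sub: "cls S C \<rho> \<subseteq> {\<sigma>. \<sigma> permutes S}"
  by (auto simp: cls_def)

lemma per_ge_leaf:
  fixes X :: "nat \<Rightarrow> nat \<Rightarrow> int"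
  assumes fin: "finite S" and nn: "\<And>\<sigma>. \<sigma> permutes S \<Longrightarrow> 0 \<le> (\<Prod>t\<in>S. X t (\<sigma> t))"
    and pv: "p \<in> S" "v \<in> S" "p \<noteq> v"
  shows "X p p * per (S - {p}) X + X p v * X v p * per (S - {p, v}) X \<le> per S X"
proof -
  have c1: "(\<Sum>\<sigma>\<in>cls S {p} id. \<Prod>t\<in>S. X t (\<sigma> t)) = X p p * per (S - {p}) X"
    using sum_cls[OF fin, of "{p}" id X] pv by simp
  have c2: "(\<Sum>\<sigma>\<in>cls S {p,v} (transpose p v). \<Prod>t\<in>S. X t (\<sigma> t)) = X p v * X v p * per (S - {p,v}) X"
    using sum_cls[OF fin, of "{p,v}" "transpose p v" X] pv permutes_swap_id[of p "{p,v}" v] by simp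
  have dj: "cls S {p} id \<inter> cls S {p,v} (transpose p v) = {}" using pv by (auto simp: cls_def)
  have fc: "finite (cls S {p} id)" "finite (cls S {p,v} (transpose p v))"
    using finite_subset[OF cls_sub finite_permutations[OF fin]] by auto
  have "(\<Sum>\<sigma>\<in>cls S {p} id \<union> cls S {p,v} (transpose p v). \<Prod>t\<in>S. X t (\<sigma> t)) \<le> per S X"
    by (rule sum_le_per[OF fin nn]) (auto simp: cls_def)
  then show ?thesis using sum.union_disjoint[OF fc dj, of "\<lambda>\<sigma>. \<Prod>t\<in>S. X t (\<sigma> t)"] c1 c2 by simp
qed

lemma per_leaf:
  fixes X :: "nat \<Rightarrow> nat \<Rightarrow> int"
  assumes fin: "finite S" and pv: "p \<in> S" "v \<in> S" "p \<noteq> v"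
    and zr: "\<And>b. b \<in> S \<Longrightarrow> b \<noteq> p \<Longrightarrow> b \<noteq> v \<Longrightarrow> X p b = 0 \<and> X b p = 0"
  shows "per S X = X p p * per (S - {p}) X + X p v * X v p * per (S - {p, v}) X"
proof -
  let ?f = "\<lambda>\<sigma>. \<Prod>t\<in>S. X t (\<sigma> t)"
  have c1: "(\<Sum>\<sigma>\<in>cls S {p} id. ?f \<sigma>) = X p p * per (S - {p}) X"
    using sum_cls[OF fin, of "{p}" id X] pv by simp
  have c2: "(\<Sum>\<sigma>\<in>cls S {p,v} (transpose p v). ?f \<sigma>) = X p v * X v p * per (S - {p,v}) X"
    using sum_cls[OF fin, of "{p,v}" "transpose p v" X] pv permutes_swap_id[of p "{p,v}" v] by simp
  have dj: "cls S {p} id \<inter> cls S {p,v} (transpose p v) = {}" using pv by (auto simp: cls_def)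
  have fc: "finite (cls S {p} id)" "finite (cls S {p,v} (transpose p v))"
    using finite_subset[OF cls_sub finite_permutations[OF fin]] by auto
  have "(\<Sum>\<sigma>\<in>cls S {p} id \<union> cls S {p,v} (transpose p v). ?f \<sigma>) = per S X"
    unfolding per_def
  proof (rule sum.mono_neutral_left[OF finite_permutations[OF fin]])
    show "cls S {p} id \<union> cls S {p, v} (transpose p v) \<subseteq> {\<sigma>. \<sigma> permutes S}"
      by (auto simp: cls_def)
    show "\<forall>\<sigma>\<in>{\<sigma>. \<sigma> permutes S} - (cls S {p} id \<union> cls S {p, v} (transpose p v)). ?f \<sigma> = 0"
    proof
      fix \<sigma> assume "\<sigma> \<in> {\<sigma>. \<sigma> permutes S} - (cls S {p} id \<union> cls S {p, v} (transpose p v))"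
      then have ps: "\<sigma> permutes S" and n1: "\<sigma> p \<noteq> p" and n2: "\<not> (\<sigma> p = v \<and> \<sigma> v = p)"
        using pv by (auto simp: cls_def)
      show "?f \<sigma> = 0"
      proof (cases "\<sigma> p = v")
        case False
        have "\<sigma> p \<in> S" using permutes_in_image[OF ps] pv by simp
        then have "X p (\<sigma> p) = 0" using zr n1 False by blast
        then show ?thesis using fin pv by (simp add: prod_zero_iff) blast
      next
        case True
        define q where "q = inv \<sigma> p"
        have sq: "\<sigma> q = p" using permutes_inverses[OF ps] by (simp add: q_def)
        have qS: "q \<in> S" using permutes_in_image[OF ps, of q] sq pv by simp
        have "q \<noteq> p" using sq True pv by auto
        moreover have "q \<noteq> v" using sq True n2 by auto
        ultimately have "X q (\<sigma> q) = 0" using zr qS sq by simp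
        then show ?thesis using fin qS by (simp add: prod_zero_iff) blast
      qed
    qed
  qed
  then show ?thesis using sum.union_disjoint[OF fc dj, of ?f] c1 c2 by simp
qed

lemma prod_inv_sym:
  fixes X :: "nat \<Rightarrow> nat \<Rightarrow> int"
  assumes p: "\<sigma> permutes S" and sym: "\<And>a b. X a b = X b a"
  shows "(\<Prod>t\<in>S. X t (inv \<sigma> t)) = (\<Prod>t\<in>S. X t (\<sigma> t))"
proof -
  have "(\<Prod>t\<in>S. X t (inv \<sigma> t)) = (\<Prod>s\<in>S. X (\<sigma> s) (inv \<sigma> (\<sigma> s)))"
    using prod.reindex_bij_betw[OF permutes_imp_bij[OF p], of "\<lambda>t. X t (inv \<sigma> t)"] by simp
  also have "\<dots> = (\<Prod>s\<in>S. X s (\<sigma> s))"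
    using permutes_inverses[OF p] sym by simp
  finally show ?thesis .
qed

lemma per_diag:
  fixes X :: "nat \<Rightarrow> nat \<Rightarrow> int"
  assumes fin: "finite S" and off: "\<And>a b. a \<in> S \<Longrightarrow> b \<in> S \<Longrightarrow> a \<noteq> b \<Longrightarrow> X a b = 0"
  shows "per S X = (\<Prod>t\<in>S. X t t)"
proof -
  let ?f = "\<lambda>\<sigma>. \<Prod>t\<in>S. X t (\<sigma> t)"
  have "per S X = sum ?f {id}"
    unfolding per_def
  proof (rule sum.mono_neutral_right[OF finite_permutations[OF fin]])
    show "{id} \<subseteq> {\<sigma>. \<sigma> permutes S}" by simp
    show "\<forall>\<sigma>\<in>{\<sigma>. \<sigma> permutes S} - {id}. ?f \<sigma> = 0"
    proof
      fix \<sigma> assume "\<sigma> \<in> {\<sigma>. \<sigma> permutes S} - {id}"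
      then have ps: "\<sigma> permutes S" and ne: "\<sigma> \<noteq> id" by auto
      then obtain t where t: "\<sigma> t \<noteq> t" by (auto simp: fun_eq_iff)
      then have tS: "t \<in> S" using permutes_not_in[OF ps] by blast
      have "\<sigma> t \<in> S" using permutes_in_image[OF ps] tS by simp
      then have "X t (\<sigma> t) = 0" using off tS t by simp
      then show "?f \<sigma> = 0" using fin tS by (simp add: prod_zero_iff) blast
    qed
  qed
  then show ?thesis by simp
qed



definition adj :: "nat \<Rightarrow> nat \<Rightarrow> nat \<Rightarrow> nat \<Rightarrow> nat \<Rightarrow> nat \<Rightarrow> nat \<Rightarrow> bool" where
"adj k i j ni nj a b \<longleftrightarrow> (1 \<le> a \<and> a < 2*k \<and> b = a+1) \<or> (1 \<le> b \<and> b < 2*k \<and> a = b+1)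
   \<or> (a = 2*k \<and> b = 1) \<or> (a = 1 \<and> b = 2*k)
   \<or> (a = i \<and> 2*k < b \<and> b \<le> 2*k+ni) \<or> (b = i \<and> 2*k < a \<and> a \<le> 2*k+ni)
   \<or> (a = j \<and> 2*k+ni < b \<and> b \<le> 2*k+ni+nj) \<or> (b = j \<and> 2*k+ni < a \<and> a \<le> 2*k+ni+nj)"

lemma lap_off: "a \<noteq> b \<Longrightarrow> laplacian E a b = (if {a,b} \<in> E then -1 else 0)"
  by (simp add: laplacian_def)

lemma lap_sym: "laplacian E a b = laplacian E b a"
  by (simp add: laplacian_def insert_commute)

lemma lap_diag:
  assumes "\<forall>e\<in>E. \<exists>x y. x \<noteq> y \<and> e = {x,y}"
  shows "laplacian E a a = int (card {b. b \<noteq> a \<and> {a,b} \<in> E})"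
proof -
  have "{e\<in>E. a \<in> e} = (\<lambda>b. {a,b}) ` {b. b \<noteq> a \<and> {a,b} \<in> E}"
  proof
    show "{e\<in>E. a \<in> e} \<subseteq> (\<lambda>b. {a,b}) ` {b. b \<noteq> a \<and> {a,b} \<in> E}"
    proof
      fix e assume e: "e \<in> {e\<in>E. a \<in> e}"
      then obtain x y where xy: "x \<noteq> y" "e = {x,y}" using assms by blast
      show "e \<in> (\<lambda>b. {a,b}) ` {b. b \<noteq> a \<and> {a,b} \<in> E}"
      proof (cases "a = x")
        case True
        then show ?thesis using e xy by (auto intro!: image_eqI[where x=y])
      next
        case False
        then have "a = y" using e xy by auto
        then show ?thesis using e xy by (auto simp: insert_commute intro!: image_eqI[where x=x])
      qed
    qed
    show "(\<lambda>b. {a,b}) ` {b. b \<noteq> a \<and> {a,b} \<in> E} \<subseteq> {e\<in>E. a \<in> e}" by auto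
  qed
  moreover have "inj_on (\<lambda>b. {a,b}) {b. b \<noteq> a \<and> {a,b} \<in> E}"
    by (auto simp: inj_on_def doubleton_eq_iff)
  ultimately show ?thesis by (simp add: laplacian_def card_image)
qed

locale gr =
  fixes k i j ni nj :: nat
  assumes k3: "k \<ge> 3" and i4: "4 < i" and ij: "i < j" and j2k: "j \<le> 2 * k"
begin

abbreviation "E \<equiv> G_edges k i j ni nj"
abbreviation "E' \<equiv> insert {1, 4} (G_edges k i j ni nj - {{1, 2}})"
abbreviation "A \<equiv> adj k i j ni nj"

lemma adj_sym: "A a b = A b a"
  unfolding adj_def by auto

lemma adj_ne: "A a b \<Longrightarrow> a \<noteq> b"
  using k3 i4 ij j2k unfolding adj_def by auto

lemma E_doubleton: "\<forall>e\<in>E. \<exists>x y. x \<noteq> y \<and> e = {x,y}"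
proof
  fix e assume "e \<in> E"
  then consider (c) a where "e = {a,a+1}" | (w) "e = {2*k,1}"
    | (p) t where "e = {i,2*k+t}" "1 \<le> t" | (q) t where "e = {j, 2*k+ni+t}" "1 \<le> t"
    unfolding G_edges_def cycle_edges_def by blast
  then show "\<exists>x y. x \<noteq> y \<and> e = {x,y}"
  proof cases
    case (c a) then show ?thesis by (intro exI[of _ a] exI[of _ "a+1"]) simp
  next
    case w then show ?thesis using k3 by (intro exI[of _ "2*k"] exI[of _ "1::nat"]) simp
  next
    case (p t) then show ?thesis using i4 ij j2k by (intro exI[of _ i] exI[of _ "2*k+t"]) simp
  next
    case (q t) then show ?thesis using i4 ij j2k by (intro exI[of _ j] exI[of _ "2*k+ni+t"]) simp
  qed
qed

lemma E'_doubleton: "\<forall>e\<in>E'. \<exists>x y. x \<noteq> y \<and> e = {x,y}"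
proof
  fix e assume "e \<in> E'"
  then consider "e = {1,4}" | "e \<in> E" by auto
  then show "\<exists>x y. x \<noteq> y \<and> e = {x,y}"
  proof cases
    case 1 then show ?thesis by (intro exI[of _ "1::nat"] exI[of _ "4::nat"]) simp
  next
    case 2 then show ?thesis using E_doubleton by blast
  qed
qed

lemma edge_iff: "{a,b} \<in> E \<longleftrightarrow> A a b"
proof
  assume "{a,b} \<in> E"
  then consider (c) c where "{a,b} = {c,c+1}" "1 \<le> c" "c < 2*k" | (w) "{a,b} = {2*k,1}"
    | (p) t where "{a,b} = {i,2*k+t}" "1 \<le> t" "t \<le> ni"
    | (q) t where "{a,b} = {j, 2*k+ni+t}" "1 \<le> t" "t \<le> nj"
    unfolding G_edges_def cycle_edges_def by blast
  then show "A a b"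
  proof cases
    case (c c)
    from c(1) have "(a = c \<and> b = c+1) \<or> (a = c+1 \<and> b = c)" by (simp add: doubleton_eq_iff)
    then show ?thesis unfolding adj_def using c(2,3) by (elim disjE) simp_all
  next
    case w
    from w have "(a = 2*k \<and> b = 1) \<or> (a = 1 \<and> b = 2*k)" by (simp add: doubleton_eq_iff)
    then show ?thesis unfolding adj_def by (elim disjE) simp_all
  next
    case (p t)
    from p(1) have "(a = i \<and> b = 2*k+t) \<or> (a = 2*k+t \<and> b = i)" by (simp add: doubleton_eq_iff)
    then show ?thesis unfolding adj_def using p(2,3) by (elim disjE) simp_all
  next
    case (q t)
    from q(1) have "(a = j \<and> b = 2*k+ni+t) \<or> (a = 2*k+ni+t \<and> b = j)" by (simp add: doubleton_eq_iff)
    then show ?thesis unfolding adj_def using q(2,3) by (elim disjE) simp_all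
  qed
next
  have C: "\<And>c. 1 \<le> c \<Longrightarrow> c < 2*k \<Longrightarrow> {c, c+1} \<in> E"
    unfolding G_edges_def cycle_edges_def by blast
  have W: "{2*k, 1} \<in> E" unfolding G_edges_def cycle_edges_def by blast
  have P: "\<And>t. 1 \<le> t \<Longrightarrow> t \<le> ni \<Longrightarrow> {i, 2*k+t} \<in> E"
    unfolding G_edges_def by blast
  have Q: "\<And>t. 1 \<le> t \<Longrightarrow> t \<le> nj \<Longrightarrow> {j, 2*k+ni+t} \<in> E"
    unfolding G_edges_def by blast
  assume "A a b"
  then consider "1 \<le> a \<and> a < 2*k \<and> b = a+1" | "1 \<le> b \<and> b < 2*k \<and> a = b+1"
   | "a = 2*k \<and> b = 1" | "a = 1 \<and> b = 2*k"
   | "a = i \<and> 2*k < b \<and> b \<le> 2*k+ni" | "b = i \<and> 2*k < a \<and> a \<le> 2*k+ni"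
   | "a = j \<and> 2*k+ni < b \<and> b \<le> 2*k+ni+nj" | "b = j \<and> 2*k+ni < a \<and> a \<le> 2*k+ni+nj"
    unfolding adj_def by argo
  then show "{a,b} \<in> E"
  proof cases
    case 1 then show ?thesis using C[of a] by simp
  next
    case 2 then show ?thesis using C[of b] by (simp add: insert_commute)
  next
    case 3 then show ?thesis using W by simp
  next
    case 4 then show ?thesis using W by (simp add: insert_commute)
  next
    case 5
    then have e: "2*k + (b - 2*k) = b" by simp
    show ?thesis using P[of "b - 2*k", unfolded e] 5 by (auto simp: insert_commute)
  next
    case 6
    then have e: "2*k + (a - 2*k) = a" by simp
    show ?thesis using P[of "a - 2*k", unfolded e] 6 by (auto simp: insert_commute)
  next
    case 7
    then have e: "2*k + ni + (b - 2*k - ni) = b" by simp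
    show ?thesis using Q[of "b - 2*k - ni", unfolded e] 7 by (auto simp: insert_commute)
  next
    case 8
    then have e: "2*k + ni + (a - 2*k - ni) = a" by simp
    show ?thesis using Q[of "a - 2*k - ni", unfolded e] 8 by (auto simp: insert_commute)
  qed
qed

abbreviation "L \<equiv> laplacian E"
abbreviation "L' \<equiv> laplacian E'"

lemma E'_iff: "{a,b} \<in> E' \<longleftrightarrow> ({a,b} = {1,4} \<or> (A a b \<and> {a,b} \<noteq> {1,2}))"
  by (simp only: insert_iff Diff_iff singleton_iff edge_iff empty_iff simp_thms)

lemma L_diag: "L a a = int (card {b. b \<noteq> a \<and> A a b})"
  using lap_diag[OF E_doubleton, of a] by (simp only: edge_iff)

lemma L'_diag: "L' a a = int (card {b. b \<noteq> a \<and> ({a,b} = {1,4} \<or> (A a b \<and> {a,b} \<noteq> {1,2}))})"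
  using lap_diag[OF E'_doubleton, of a] by (simp only: E'_iff)

lemma L_off: "a \<noteq> b \<Longrightarrow> L a b = (if A a b then -1 else 0)"
  using lap_off[of a b E] by (simp only: edge_iff simp_thms)

lemma L'_off: "a \<noteq> b \<Longrightarrow> L' a b = (if ({a,b} = {1,4} \<or> (A a b \<and> {a,b} \<noteq> {1,2})) then -1 else 0)"
  using lap_off[of a b E'] by (simp only: E'_iff simp_thms)

lemma L22: "L 2 2 = 2"
proof -
  have "{b. b \<noteq> 2 \<and> A 2 b} = {1,3}" using k3 i4 ij j2k unfolding adj_def by auto
  then show ?thesis using L_diag by simp
qed

lemma L33: "L 3 3 = 2"
proof -
  have "{b. b \<noteq> 3 \<and> A 3 b} = {2,4}" using k3 i4 ij j2k unfolding adj_def by auto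
  then show ?thesis using L_diag by simp
qed

lemma L44: "L 4 4 = 2"
proof -
  have "{b. b \<noteq> 4 \<and> A 4 b} = {3,5}" using k3 i4 ij j2k unfolding adj_def by auto
  then show ?thesis using L_diag by simp
qed

lemma L11: "L 1 1 = 2"
proof -
  have "{b. b \<noteq> 1 \<and> A 1 b} = {2,2*k}" using k3 i4 ij j2k unfolding adj_def by auto
  then show ?thesis using L_diag k3 by simp
qed

lemma L'22: "L' 2 2 = 1"
proof -
  have "{b. b \<noteq> 2 \<and> ({2,b} = {1,4} \<or> (A 2 b \<and> {2,b} \<noteq> {1,2}))} = {3}"
    using k3 i4 ij j2k unfolding adj_def by (auto simp: doubleton_eq_iff)
  then show ?thesis using L'_diag by simp
qed

lemma L'33: "L' 3 3 = 2"
proof -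
  have "{b. b \<noteq> 3 \<and> ({3,b} = {1,4} \<or> (A 3 b \<and> {3,b} \<noteq> {1,2}))} = {2,4}"
    using k3 i4 ij j2k unfolding adj_def by (auto simp: doubleton_eq_iff)
  then show ?thesis using L'_diag by simp
qed

lemma L'44: "L' 4 4 = 3"
proof -
  have "{b. b \<noteq> 4 \<and> ({4,b} = {1,4} \<or> (A 4 b \<and> {4,b} \<noteq> {1,2}))} = {1,3,5}"
    using k3 i4 ij j2k unfolding adj_def by (auto simp: doubleton_eq_iff)
  then show ?thesis using L'_diag by simp
qed

lemma L'11: "L' 1 1 = 2"
proof -
  have "{b. b \<noteq> 1 \<and> ({1,b} = {1,4} \<or> (A 1 b \<and> {1,b} \<noteq> {1,2}))} = {4,2*k}"
    using k3 i4 ij j2k unfolding adj_def by (auto simp: doubleton_eq_iff)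
  then show ?thesis using L'_diag k3 by simp
qed

lemma L'_diag_eq: "a \<noteq> 1 \<Longrightarrow> a \<noteq> 2 \<Longrightarrow> a \<noteq> 4 \<Longrightarrow> L' a a = L a a"
proof -
  assume a: "a \<noteq> 1" "a \<noteq> 2" "a \<noteq> 4"
  have "{b. b \<noteq> a \<and> ({a,b} = {1,4} \<or> (A a b \<and> {a,b} \<noteq> {1,2}))} = {b. b \<noteq> a \<and> A a b}"
    using a by (auto simp: doubleton_eq_iff)
  then show ?thesis using L'_diag L_diag by simp
qed

lemma L_pend: "2*k < p \<Longrightarrow> p \<le> 2*k+ni+nj \<Longrightarrow> L p p = 1"
proof -
  assume p: "2*k < p" "p \<le> 2*k+ni+nj"
  show ?thesis
  proof (cases "p \<le> 2*k+ni")
    case True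
    then have "{b. b \<noteq> p \<and> A p b} = {i}" using p k3 i4 ij j2k unfolding adj_def by auto
    then show ?thesis using L_diag by simp
  next
    case False
    then have "{b. b \<noteq> p \<and> A p b} = {j}" using p k3 i4 ij j2k unfolding adj_def by auto
    then show ?thesis using L_diag by simp
  qed
qed

lemma L_diag_pos: "1 \<le> t \<Longrightarrow> t \<le> 2*k+ni+nj \<Longrightarrow> 1 \<le> L t t"
proof -
  assume t: "1 \<le> t" "t \<le> 2*k+ni+nj"
  have fin: "finite {b. b \<noteq> t \<and> A t b}"
    by (rule finite_subset[of _ "{..2*k+ni+nj}"]) (use k3 i4 ij j2k in \<open>auto simp: adj_def\<close>)
  obtain c where c: "c \<noteq> t" "A t c"
  proof (cases "t \<le> 2*k")
    case True
    show ?thesis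
    proof (cases "t = 1")
      case True then show ?thesis using that[of 2] k3 unfolding adj_def by auto
    next
      case False
      then have "A t (t-1)" unfolding adj_def by (intro disjI2[OF disjI1]) (use t \<open>t \<le> 2*k\<close> in arith)
      moreover have "t - 1 \<noteq> t" using t False by simp
      ultimately show ?thesis using that by blast
    qed
  next
    case False
    show ?thesis
    proof (cases "t \<le> 2*k+ni")
      case True then show ?thesis using that[of i] False i4 j2k ij unfolding adj_def by auto
    next
      case F2: False then show ?thesis using that[of j] False t i4 j2k ij unfolding adj_def by auto
    qed
  qed
  then have "card {b. b \<noteq> t \<and> A t b} \<ge> 1" using fin
    by (metis (mono_tags, lifting) One_nat_def Suc_leI card_gt_0_iff empty_iff mem_Collect_eq)
  then show ?thesis using L_diag by simp
qed

end


context gr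
begin

abbreviation "V \<equiv> {1 .. 2*k+ni+nj}"
abbreviation "W \<equiv> V - {2,3}"

lemmas asm = k3 i4 ij j2k

definition col :: "nat \<Rightarrow> bool" where
  "col a = (if a \<le> 2*k then even a else if a \<le> 2*k+ni then odd i else odd j)"

lemma adj_col: "A a b \<Longrightarrow> col a \<noteq> col b"
proof -
  assume "A a b"
  then consider "1 \<le> a \<and> a < 2*k \<and> b = a+1" | "1 \<le> b \<and> b < 2*k \<and> a = b+1"
   | "a = 2*k \<and> b = 1" | "a = 1 \<and> b = 2*k"
   | "a = i \<and> 2*k < b \<and> b \<le> 2*k+ni" | "b = i \<and> 2*k < a \<and> a \<le> 2*k+ni"
   | "a = j \<and> 2*k+ni < b \<and> b \<le> 2*k+ni+nj" | "b = j \<and> 2*k+ni < a \<and> a \<le> 2*k+ni+nj"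
    unfolding adj_def by argo
  then show ?thesis
  proof cases
    case 1 then show ?thesis by (simp add: col_def)
  next
    case 2 then show ?thesis by (simp add: col_def)
  next
    case 3 then show ?thesis using k3 by (simp add: col_def)
  next
    case 4 then show ?thesis using k3 by (simp add: col_def)
  next
    case 5 then show ?thesis using asm by (simp add: col_def)
  next
    case 6 then show ?thesis using asm by (simp add: col_def)
  next
    case 7 then show ?thesis using asm by (simp add: col_def)
  next
    case 8 then show ?thesis using asm by (simp add: col_def)
  qed
qed

lemma L_nonneg: "finite S \<Longrightarrow> \<sigma> permutes S \<Longrightarrow> 0 \<le> (\<Prod>t\<in>S. L t (\<sigma> t))"
proof -
  assume fin: "finite S" and p: "\<sigma> permutes S"
  show ?thesis
  proof (rule prod_nonneg_bip[OF fin p, where col = col])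
    show "\<And>a. 0 \<le> L a a" by (simp add: laplacian_def)
    show "\<And>a b. a \<noteq> b \<Longrightarrow> L a b \<le> 0" by (simp add: L_off)
    show "\<And>a b. a \<noteq> b \<Longrightarrow> L a b \<noteq> 0 \<Longrightarrow> col a \<noteq> col b"
      using adj_col by (auto simp: L_off split: if_splits)
  qed
qed

lemma per_L_ge1: "S \<subseteq> V \<Longrightarrow> 1 \<le> per S L"
proof -
  assume SV: "S \<subseteq> V"
  have fin: "finite S" using SV finite_subset by blast
  have "(\<Sum>\<sigma>\<in>cls S S id. \<Prod>t\<in>S. L t (\<sigma> t)) \<le> per S L"
    by (rule sum_le_per[OF fin L_nonneg[OF fin] cls_sub])
  moreover have "(\<Sum>\<sigma>\<in>cls S S id. \<Prod>t\<in>S. L t (\<sigma> t)) = (\<Prod>t\<in>S. L t t)"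
    using sum_cls[OF fin, of S id L] by simp
  moreover have "1 \<le> (\<Prod>t\<in>S. L t t)"
    by (rule prod_ge_1) (use SV L_diag_pos in auto)
  ultimately show ?thesis by linarith
qed

lemma L_step: "1 \<le> a \<Longrightarrow> a < 2*k \<Longrightarrow> L a (a+1) = -1 \<and> L (a+1) a = -1"
  using asm by (simp add: L_off adj_def)

lemma L_vals: "L 1 2 = -1" "L 2 1 = -1" "L 2 3 = -1" "L 3 2 = -1" "L 3 4 = -1" "L 4 3 = -1"
   "L 4 5 = -1" "L 5 4 = -1"
  using k3 by (simp_all add: L_off adj_def)

lemma finV: "finite V" by simp

lemma lowerG: "5 * per W L + 2 * per (W - {4}) L + 2 * per (W - {1}) L + per (W - {1,4}) L \<le> per V L"
proof -
  let ?f = "\<lambda>\<sigma>. \<Prod>t\<in>V. L t (\<sigma> t)"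
  define A1 where "A1 = cls V {2,3} id"
  define A2 where "A2 = cls V {2,3} (transpose 2 3)"
  define A3 where "A3 = cls V {2,3,4} (transpose 3 4)"
  define A4 where "A4 = cls V {1,2,3} (transpose 1 2)"
  define A5 where "A5 = cls V {1,2,3,4} (transpose 1 2 \<circ> transpose 3 4)"
  have sub: "{2,3} \<subseteq> V" "{2,3,4} \<subseteq> V" "{1,2,3} \<subseteq> V" "{1,2,3,4} \<subseteq> V" using k3 by auto
  have p3: "transpose 3 4 permutes {2,3,4::nat}" by (rule permutes_swap_id) auto
  have p4: "transpose 1 2 permutes {1,2,3::nat}" by (rule permutes_swap_id) auto
  have p5: "transpose 1 2 \<circ> transpose 3 4 permutes {1,2,3,4::nat}"
    by (rule permutes_compose; rule permutes_swap_id) auto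
  have p2: "transpose 2 3 permutes {2,3::nat}" by (rule permutes_swap_id) auto
  have s1: "sum ?f A1 = 4 * per W L"
  proof -
    have "sum ?f A1 = (\<Prod>c\<in>{2,3}. L c (id c)) * per (V - {2,3}) L"
      unfolding A1_def by (rule sum_cls[OF finV sub(1) permutes_id])
    then show ?thesis using L22 L33 by simp
  qed
  have s2: "sum ?f A2 = per W L"
  proof -
    have "sum ?f A2 = (\<Prod>c\<in>{2,3}. L c (transpose 2 3 c)) * per (V - {2,3}) L"
      unfolding A2_def by (rule sum_cls[OF finV sub(1) p2])
    then show ?thesis using L_vals by simp
  qed
  have s3: "sum ?f A3 = 2 * per (W - {4}) L"
  proof -
    have "sum ?f A3 = (\<Prod>c\<in>{2,3,4}. L c (transpose 3 4 c)) * per (V - {2,3,4}) L"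
      unfolding A3_def by (rule sum_cls[OF finV sub(2) p3])
    also have "(\<Prod>c\<in>{2,3,4}. L c (transpose 3 4 c)) = 2" using L22 L_vals by simp
    also have "V - {2,3,4} = W - {4}" by auto
    finally show ?thesis by simp
  qed
  have s4: "sum ?f A4 = 2 * per (W - {1}) L"
  proof -
    have "sum ?f A4 = (\<Prod>c\<in>{1,2,3}. L c (transpose 1 2 c)) * per (V - {1,2,3}) L"
      unfolding A4_def by (rule sum_cls[OF finV sub(3) p4])
    also have "(\<Prod>c\<in>{1,2,3}. L c (transpose 1 2 c)) = 2" using L33 L_vals by simp
    also have "V - {1,2,3} = W - {1}" by auto
    finally show ?thesis by simp
  qed
  have s5: "sum ?f A5 = per (W - {1,4}) L"
  proof -
    have "sum ?f A5 = (\<Prod>c\<in>{1,2,3,4}. L c ((transpose 1 2 \<circ> transpose 3 4) c)) * per (V - {1,2,3,4}) L"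
      unfolding A5_def by (rule sum_cls[OF finV sub(4) p5])
    also have "(\<Prod>c\<in>{1,2,3,4}. L c ((transpose 1 2 \<circ> transpose 3 4) c)) = 1" using L_vals by simp
    also have "V - {1,2,3,4} = W - {1,4}" by auto
    finally show ?thesis by simp
  qed
  have fA: "finite A1" "finite A2" "finite A3" "finite A4" "finite A5"
    unfolding A1_def A2_def A3_def A4_def A5_def
    using finite_subset[OF cls_sub finite_permutations[OF finV]] by auto
  have d: "A4 \<inter> A5 = {}" "A3 \<inter> (A4 \<union> A5) = {}" "A2 \<inter> (A3 \<union> (A4 \<union> A5)) = {}"
     "A1 \<inter> (A2 \<union> (A3 \<union> (A4 \<union> A5))) = {}"
    unfolding A1_def A2_def A3_def A4_def A5_def cls_def by auto
  have "sum ?f (A1 \<union> (A2 \<union> (A3 \<union> (A4 \<union> A5)))) = sum ?f A1 + (sum ?f A2 + (sum ?f A3 + (sum ?f A4 + sum ?f A5)))"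
    using fA d by (simp add: sum.union_disjoint)
  moreover have "sum ?f (A1 \<union> (A2 \<union> (A3 \<union> (A4 \<union> A5)))) \<le> per V L"
    by (rule sum_le_per[OF finV L_nonneg[OF finV]]) (auto simp: A1_def A2_def A3_def A4_def A5_def cls_def)
  ultimately show ?thesis using s1 s2 s3 s4 s5 by linarith
qed

lemma leafW: "2 * per (W - {4}) L + per (W - {4,5}) L \<le> per W L"
proof -
  have "L 4 4 * per (W - {4}) L + L 4 5 * L 5 4 * per (W - {4,5}) L \<le> per W L"
    by (rule per_ge_leaf[OF _ L_nonneg]) (use k3 in auto)
  then show ?thesis using L44 L_vals by simp
qed

lemma leafW1: "2 * per (W - {1,4}) L + per (W - {1,4,5}) L \<le> per (W - {1}) L"
proof -
  have "L 4 4 * per (W - {1} - {4}) L + L 4 5 * L 5 4 * per (W - {1} - {4,5}) L \<le> per (W - {1}) L"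
    by (rule per_ge_leaf[OF _ L_nonneg]) (use k3 in auto)
  moreover have "W - {1} - {4} = W - {1,4}" "W - {1} - {4,5} = W - {1,4,5}" by auto
  ultimately show ?thesis using L44 L_vals by simp
qed

lemma L'_vals: "L' 2 3 = -1" "L' 3 2 = -1" "L' 3 4 = -1" "L' 4 3 = -1" "L' 1 4 = -1" "L' 4 1 = -1"
  using k3 L'_off[of 2 3] L'_off[of 3 2] L'_off[of 3 4] L'_off[of 4 3] L'_off[of 1 4] L'_off[of 4 1]
  by (simp_all add: adj_def doubleton_eq_iff)

lemma L_14: "L 1 4 = 0" "L 4 1 = 0"
  using k3 by (simp_all add: L_off adj_def)

lemma agree: "a \<in> W \<Longrightarrow> b \<in> W \<Longrightarrow> \<not> (a = 4 \<and> b = 4) \<Longrightarrow> \<not> (a = 1 \<and> b = 4) \<Longrightarrow> \<not> (a = 4 \<and> b = 1)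
   \<Longrightarrow> L' a b = L a b"
proof -
  assume a: "a \<in> W" "b \<in> W" "\<not> (a = 4 \<and> b = 4)" "\<not> (a = 1 \<and> b = 4)" "\<not> (a = 4 \<and> b = 1)"
  show ?thesis
  proof (cases "a = b")
    case True
    show ?thesis
    proof (cases "a = 1")
      case True then show ?thesis using \<open>a = b\<close> L11 L'11 by simp
    next
      case False then show ?thesis using \<open>a = b\<close> a L'_diag_eq by auto
    qed
  next
    case False
    have "\<not> ({a,b} = {1,4})" using a by (auto simp: doubleton_eq_iff)
    moreover have "\<not> ({a,b} = {1,2})" using a by (auto simp: doubleton_eq_iff)
    ultimately show ?thesis using False L'_off[of a b] L_off[of a b] by simp
  qed
qed

lemma per_agree: "S \<subseteq> W - {4} \<Longrightarrow> per S L' = per S L"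
  by (rule per_cong) (use agree in blast)

lemma G'_outer: "per V L' = 3 * per W L' + per (W - {4}) L'"
proof -
  have "per V L' = L' 2 2 * per (V - {2}) L' + L' 2 3 * L' 3 2 * per (V - {2,3}) L'"
  proof (rule per_leaf[OF finV])
    show "2 \<in> V" "3 \<in> V" "(2::nat) \<noteq> 3" using k3 by auto
    fix b assume b: "b \<in> V" "b \<noteq> 2" "b \<noteq> 3"
    show "L' 2 b = 0 \<and> L' b 2 = 0"
    proof (cases "b = 1")
      case True
      then show ?thesis using L'_off[of 2 b] L'_off[of b 2] by (auto simp: doubleton_eq_iff)
    next
      case False
      have "\<not> A 2 b" using b False k3 i4 ij by (auto simp: adj_def)
      then show ?thesis
        using b L'_off[of 2 b] L'_off[of b 2] by (auto simp: doubleton_eq_iff adj_sym)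
    qed
  qed
  moreover have "per (V - {2}) L' = L' 3 3 * per (V - {2} - {3}) L' + L' 3 4 * L' 4 3 * per (V - {2} - {3,4}) L'"
  proof (rule per_leaf)
    show "finite (V - {2})" by simp
    show "3 \<in> V - {2}" "4 \<in> V - {2}" "(3::nat) \<noteq> 4" using k3 by auto
    fix b assume b: "b \<in> V - {2}" "b \<noteq> 3" "b \<noteq> 4"
    have "b \<noteq> 2" using b by simp
    have "\<not> A 3 b" using b \<open>b \<noteq> 2\<close> k3 i4 ij by (cases "b = 1") (auto simp: adj_def)
    then show "L' 3 b = 0 \<and> L' b 3 = 0"
      using b L'_off[of 3 b] L'_off[of b 3] by (auto simp: doubleton_eq_iff adj_sym)
  qed
  moreover have "V - {2} - {3} = W" "V - {2} - {3,4} = W - {4}" by auto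
  ultimately show ?thesis using L'22 L'33 L'_vals by simp
qed

definition "B1 = cls W {4} id"
definition "B2 = {\<sigma>. \<sigma> permutes W \<and> \<sigma> 4 \<noteq> 4 \<and> \<sigma> 1 \<noteq> 4 \<and> \<sigma> 4 \<noteq> 1}"
definition "B3 = cls W {1,4} (transpose 1 4)"
definition "B4 = {\<sigma>. \<sigma> permutes W \<and> \<sigma> 4 \<noteq> 4 \<and> \<sigma> 1 = 4 \<and> \<sigma> 4 \<noteq> 1}"
definition "B5 = {\<sigma>. \<sigma> permutes W \<and> \<sigma> 4 \<noteq> 4 \<and> \<sigma> 1 \<noteq> 4 \<and> \<sigma> 4 = 1}"

lemma finW: "finite W" by simp

lemma partW:
  fixes X :: "nat \<Rightarrow> nat \<Rightarrow> int"
  defines "f \<equiv> \<lambda>\<sigma>. \<Prod>t\<in>W. X t (\<sigma> t)"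
  shows "per W X = sum f B1 + (sum f B2 + (sum f B3 + (sum f B4 + sum f B5)))"
proof -
  have U: "{\<sigma>. \<sigma> permutes W} = B1 \<union> (B2 \<union> (B3 \<union> (B4 \<union> B5)))"
    unfolding B1_def B2_def B3_def B4_def B5_def cls_def by auto
  have fP: "finite {\<sigma>. \<sigma> permutes W}" using finite_permutations[OF finW] .
  have fB: "finite B1" "finite B2" "finite B3" "finite B4" "finite B5"
    using finite_subset[OF _ fP] U by auto
  have d: "B4 \<inter> B5 = {}" "B3 \<inter> (B4 \<union> B5) = {}" "B2 \<inter> (B3 \<union> (B4 \<union> B5)) = {}"
     "B1 \<inter> (B2 \<union> (B3 \<union> (B4 \<union> B5))) = {}"
    unfolding B1_def B2_def B3_def B4_def B5_def cls_def by auto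
  have "per W X = sum f (B1 \<union> (B2 \<union> (B3 \<union> (B4 \<union> B5))))"
    unfolding per_def f_def U[symmetric] ..
  also have "\<dots> = sum f B1 + (sum f B2 + (sum f B3 + (sum f B4 + sum f B5)))"
    using fB d by (simp add: sum.union_disjoint)
  finally show ?thesis .
qed

lemma L'_sym: "L' a b = L' b a" by (rule lap_sym)

definition "Cy = insert 1 {4..2*k}"
definition "rot x = (if x = 1 then 4 else if x = 2*k then 1 else if 4 \<le> x \<and> x < 2*k then x+1 else x)"

lemma force:
  assumes p: "\<sigma> permutes W" and s1: "\<sigma> 1 = 4" and s44: "\<sigma> 4 \<noteq> 4" and s41: "\<sigma> 4 \<noteq> 1"
    and nz: "\<And>t. t \<in> W \<Longrightarrow> L' t (\<sigma> t) \<noteq> 0"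
  shows "\<forall>c\<in>Cy. \<sigma> c = rot c"
proof -
  have inj: "\<And>x y. \<sigma> x = \<sigma> y \<Longrightarrow> x = y" using permutes_inj[OF p] by (simp add: inj_eq)
  have img: "\<And>x. x \<in> W \<Longrightarrow> \<sigma> x \<in> W" using permutes_in_image[OF p] by simp
  have adjf: "\<And>t. t \<in> W \<Longrightarrow> \<sigma> t \<noteq> t \<Longrightarrow> {t, \<sigma> t} = {1,4} \<or> (A t (\<sigma> t) \<and> {t, \<sigma> t} \<noteq> {1,2})"
  proof -
    fix t assume t: "t \<in> W" "\<sigma> t \<noteq> t"
    show "{t, \<sigma> t} = {1,4} \<or> (A t (\<sigma> t) \<and> {t, \<sigma> t} \<noteq> {1,2})"
      using nz[OF t(1)] L'_off[of t "\<sigma> t"] t(2) by (auto split: if_splits)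
  qed
  have pend: "\<And>b. b \<in> W \<Longrightarrow> 2*k < b \<Longrightarrow> \<sigma> b \<noteq> b \<Longrightarrow> (b \<le> 2*k+ni \<longrightarrow> \<sigma> b = i) \<and> (\<not> b \<le> 2*k+ni \<longrightarrow> \<sigma> b = j)"
  proof -
    fix b assume b: "b \<in> W" "2*k < b" "\<sigma> b \<noteq> b"
    have "\<not> {b, \<sigma> b} = {1,4}" using b k3 by (auto simp: doubleton_eq_iff)
    then have "A b (\<sigma> b)" using adjf[OF b(1) b(3)] by blast
    then show "(b \<le> 2*k+ni \<longrightarrow> \<sigma> b = i) \<and> (\<not> b \<le> 2*k+ni \<longrightarrow> \<sigma> b = j)"
      using b(2) i4 ij j2k unfolding adj_def by auto
  qed
  have main: "\<forall>t. 4 \<le> t \<longrightarrow> t \<le> 2*k \<longrightarrow> \<sigma> t = rot t"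
  proof (rule allI, induct_tac t rule: nat_less_induct, intro impI)
    fix t assume IH: "\<forall>s<t. 4 \<le> s \<longrightarrow> s \<le> 2*k \<longrightarrow> \<sigma> s = rot s"
      and t: "4 \<le> t" "t \<le> 2*k"
    define pt where "pt = (if t = 4 then 1 else t - 1)"
    have spt: "\<sigma> pt = t"
    proof (cases "t = 4")
      case True then show ?thesis using s1 by (simp add: pt_def)
    next
      case False
      then have "\<sigma> (t-1) = rot (t-1)" using IH t by simp
      moreover have "4 \<le> t-1" "t-1 < 2*k" "t-1 \<noteq> 1" "t-1 \<noteq> 2*k" using False t by auto
      ultimately show ?thesis using False by (simp add: pt_def rot_def)
    qed
    have pt: "pt \<noteq> t" "pt \<le> 2*k" using t by (auto simp: pt_def)
    have tW: "t \<in> W" using t by auto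
    define b where "b = \<sigma> t"
    have bW: "b \<in> W" using img[OF tW] by (simp add: b_def)
    have bt: "b \<noteq> t"
    proof
      assume "b = t"
      show False
      proof (cases "t = 4")
        case True then show False using s44 \<open>b = t\<close> by (simp add: b_def)
      next
        case False
        then have "\<sigma> t = \<sigma> pt" using spt \<open>b = t\<close> by (simp add: b_def)
        then show False using inj pt by metis
      qed
    qed
    have ad: "{t, b} = {1,4} \<or> (A t b \<and> {t, b} \<noteq> {1,2})" using adjf[OF tW] bt by (simp add: b_def)
    have pendc: "2*k < b \<Longrightarrow> False"
    proof -
      assume "2*k < b"
      have sbb: "\<sigma> b \<noteq> b"
      proof
        assume "\<sigma> b = b"
        then have "\<sigma> b = \<sigma> t" by (simp add: b_def)
        then have "b = t" using inj by metis
        then show False using \<open>2*k < b\<close> t by simp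
      qed
      have sb: "\<sigma> b \<le> 2*k" using pend[OF bW \<open>2*k < b\<close> sbb] ij j2k by (cases "b \<le> 2*k+ni") auto
      have "A t b" using ad \<open>2*k < b\<close> t by (auto simp: doubleton_eq_iff)
      then have "(t = i \<and> b \<le> 2*k+ni) \<or> (t = j \<and> \<not> b \<le> 2*k+ni)"
        using \<open>2*k < b\<close> t i4 ij j2k unfolding adj_def by auto
      then have "\<sigma> b = t" using pend[OF bW \<open>2*k < b\<close> sbb] by auto
      then have "b = pt" using spt inj by metis
      then show False using pt \<open>2*k < b\<close> by simp
    qed
    show "\<sigma> t = rot t"
    proof (cases "{t, b} = {1,4}")
      case True
      then have "t = 4" "b = 1" using t by (auto simp: doubleton_eq_iff)
      then show ?thesis using s41 by (simp add: b_def)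
    next
      case False
      then have Atb: "A t b" using ad by simp
      have "b \<le> 2*k" using pendc by (meson not_le)
      then consider "t < 2*k \<and> b = t + 1" | "b + 1 = t" | "t = 2*k \<and> b = 1"
        using Atb t i4 ij j2k unfolding adj_def by auto
      then show ?thesis
      proof cases
        case 1 then show ?thesis using t by (simp add: b_def rot_def)
      next
        case 3 then show ?thesis using k3 by (auto simp: b_def rot_def)
      next
        case 2
        show ?thesis
        proof (cases "t = 4")
          case True then show ?thesis using 2 bW by simp
        next
          case F4: False
          show ?thesis
          proof (cases "t = 5")
            case True
            then have "\<sigma> t = \<sigma> 1" using 2 s1 by (simp add: b_def)
            then show ?thesis using inj True by fastforce
          next
            case False
            then have "\<sigma> (t-2) = rot (t-2)" using IH t F4 by simp
            moreover have "4 \<le> t-2" "t-2 < 2*k" "t-2 \<noteq> 1" "t-2 \<noteq> 2*k" "t - 2 + 1 = t - 1"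
              using t F4 False by auto
            ultimately have "\<sigma> (t-2) = t - 1" by (simp add: rot_def)
            then have "\<sigma> (t-2) = \<sigma> t" using 2 by (simp add: b_def)
            then have "t - 2 = t" using inj by metis
            then show ?thesis using t by simp
          qed
        qed
      qed
    qed
  qed
  show ?thesis
  proof
    fix c assume "c \<in> Cy"
    then consider "c = 1" | "4 \<le> c \<and> c \<le> 2*k" by (auto simp: Cy_def)
    then show "\<sigma> c = rot c"
    proof cases
      case 1 then show ?thesis using s1 by (simp add: rot_def)
    next
      case 2 then show ?thesis using main by blast
    qed
  qed
qed

lemma rot_perm: "rot permutes Cy"
proof (rule bij_imp_permutes)
  define ri where "ri x = (if x = 4 then 1 else if x = 1 then 2*k else x - 1)" for x :: nat
  show "bij_betw rot Cy Cy"
  proof (rule bij_betw_byWitness[where f'=ri])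
    show "\<forall>a\<in>Cy. ri (rot a) = a" using k3 by (auto simp: Cy_def rot_def ri_def)
    show "\<forall>a\<in>Cy. rot (ri a) = a" using k3 by (auto simp: Cy_def rot_def ri_def)
    show "rot ` Cy \<subseteq> Cy" using k3 by (auto simp: Cy_def rot_def)
    show "ri ` Cy \<subseteq> Cy" using k3 by (auto simp: Cy_def ri_def)
  qed
  show "\<And>x. x \<notin> Cy \<Longrightarrow> rot x = x" using k3 by (auto simp: Cy_def rot_def)
qed

lemma Cy_W: "Cy \<subseteq> W" using k3 by (auto simp: Cy_def)

lemma card_Cy: "card Cy = 2*k - 2"
proof -
  have "1 \<notin> {4..2*k}" by simp
  then have "card Cy = Suc (card {4..2*k})" by (simp add: Cy_def)
  then show ?thesis using k3 by simp
qed

lemma prod_Cy: "(\<Prod>c\<in>Cy. L' c (rot c)) = 1"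
proof -
  have "(\<Prod>c\<in>Cy. L' c (rot c)) = (\<Prod>c\<in>Cy. -1)"
  proof (rule prod.cong[OF refl])
    fix c assume c: "c \<in> Cy"
    consider "c = 1" | "c = 2*k" | "4 \<le> c \<and> c < 2*k" using c by (auto simp: Cy_def, linarith)
    then show "L' c (rot c) = -1"
    proof cases
      case 1 then show ?thesis using L'_vals by (simp add: rot_def)
    next
      case 2
      have "L' (2*k) 1 = -1" using L'_off[of "2*k" 1] k3 by (auto simp: adj_def doubleton_eq_iff)
      then show ?thesis using 2 k3 by (simp add: rot_def)
    next
      case 3
      have "L' c (c+1) = -1" using L'_off[of c "c+1"] 3 by (auto simp: adj_def doubleton_eq_iff)
      then show ?thesis using 3 by (simp add: rot_def)
    qed
  qed
  also have "\<dots> = (-1) ^ (2*(k-1))" using card_Cy by (simp add: right_diff_distrib')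
  also have "\<dots> = 1" by (simp add: power_mult)
  finally show ?thesis .
qed

lemma per_rest: "per (W - Cy) L' = 1"
proof -
  have big: "\<And>a. a \<in> W - Cy \<Longrightarrow> 2*k < a \<and> a \<le> 2*k+ni+nj"
    by (auto simp: Cy_def)
  have "per (W - Cy) L' = (\<Prod>t\<in>W - Cy. L' t t)"
  proof (rule per_diag)
    show "finite (W - Cy)" by simp
    fix a b assume ab: "a \<in> W - Cy" "b \<in> W - Cy" "a \<noteq> b"
    have "\<not> A a b" using big[OF ab(1)] big[OF ab(2)] i4 ij j2k by (auto simp: adj_def)
    moreover have "{a,b} \<noteq> {1,4}" using big[OF ab(1)] k3 by (auto simp: doubleton_eq_iff)
    ultimately show "L' a b = 0" using L'_off[of a b] ab(3) by simp
  qed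
  also have "\<dots> = (\<Prod>t\<in>W - Cy. 1)"
  proof (rule prod.cong[OF refl])
    fix t assume t: "t \<in> W - Cy"
    have "t \<noteq> 1" "t \<noteq> 2" "t \<noteq> 4" using big[OF t] k3 by auto
    then show "L' t t = 1" using L'_diag_eq L_pend big[OF t] by simp
  qed
  finally show ?thesis by simp
qed

lemma B4_sum: "(\<Sum>\<sigma>\<in>B4. \<Prod>t\<in>W. L' t (\<sigma> t)) = 1"
proof -
  let ?f' = "\<lambda>\<sigma>. \<Prod>t\<in>W. L' t (\<sigma> t)"
  have fB4: "finite B4"
    by (rule finite_subset[OF _ finite_permutations[OF finW]]) (auto simp: B4_def)
  have RB: "cls W Cy rot \<subseteq> B4"
  proof
    fix \<sigma> assume "\<sigma> \<in> cls W Cy rot"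
    then have s: "\<sigma> permutes W" "\<And>c. c \<in> Cy \<Longrightarrow> \<sigma> c = rot c" by (auto simp: cls_def)
    have "1 \<in> Cy" "4 \<in> Cy" using k3 by (auto simp: Cy_def)
    then have "\<sigma> 1 = 4" "\<sigma> 4 = 5" using s(2) k3 by (auto simp: rot_def)
    then show "\<sigma> \<in> B4" using s(1) by (simp add: B4_def)
  qed
  have "sum ?f' (cls W Cy rot) = sum ?f' B4"
  proof (rule sum.mono_neutral_left[OF fB4 RB], rule ballI)
    fix \<sigma> assume s: "\<sigma> \<in> B4 - cls W Cy rot"
    then have p: "\<sigma> permutes W" "\<sigma> 4 \<noteq> 4" "\<sigma> 1 = 4" "\<sigma> 4 \<noteq> 1" by (auto simp: B4_def)
    show "?f' \<sigma> = 0"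
    proof (rule ccontr)
      assume "?f' \<sigma> \<noteq> 0"
      then have "\<And>t. t \<in> W \<Longrightarrow> L' t (\<sigma> t) \<noteq> 0" using finW by (simp add: prod_zero_iff)
      then have "\<forall>c\<in>Cy. \<sigma> c = rot c" by (rule force[OF p(1) p(3) p(2) p(4)])
      then have "\<sigma> \<in> cls W Cy rot" using p(1) by (simp add: cls_def)
      then show False using s by simp
    qed
  qed
  moreover have "sum ?f' (cls W Cy rot) = (\<Prod>c\<in>Cy. L' c (rot c)) * per (W - Cy) L'"
    by (rule sum_cls[OF finW Cy_W rot_perm])
  ultimately show ?thesis using prod_Cy per_rest by simp
qed

lemma B5_sum: "(\<Sum>\<sigma>\<in>B5. \<Prod>t\<in>W. L' t (\<sigma> t)) = 1"
proof -
  have "(\<Sum>\<sigma>\<in>B5. \<Prod>t\<in>W. L' t (\<sigma> t)) = (\<Sum>\<sigma>\<in>B5. \<Prod>t\<in>W. L' t (inv \<sigma> t))"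
    by (rule sum.cong[OF refl], rule prod_inv_sym[symmetric]) (auto simp: B5_def intro: lap_sym)
  also have "\<dots> = (\<Sum>\<tau>\<in>B4. \<Prod>t\<in>W. L' t (\<tau> t))"
  proof (rule sum.reindex_bij_witness[where i=inv and j=inv])
    fix \<sigma> assume "\<sigma> \<in> B5"
    then have p: "\<sigma> permutes W" "\<sigma> 4 \<noteq> 4" "\<sigma> 1 \<noteq> 4" "\<sigma> 4 = 1" by (auto simp: B5_def)
    show "inv (inv \<sigma>) = \<sigma>" using permutes_inv_inv[OF p(1)] .
    have "inv \<sigma> 1 = 4" using permutes_inv_eq[OF p(1)] p(4) by simp
    moreover have "inv \<sigma> 4 \<noteq> 4" using permutes_inv_eq[OF p(1)] p(2) by simp
    moreover have "inv \<sigma> 4 \<noteq> 1" using permutes_inv_eq[OF p(1)] p(3) by simp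
    ultimately show "inv \<sigma> \<in> B4" using permutes_inv[OF p(1)] by (simp add: B4_def)
    show "(\<Prod>t\<in>W. L' t (inv \<sigma> t)) = (\<Prod>t\<in>W. L' t (inv \<sigma> t))" ..
  next
    fix \<tau> assume "\<tau> \<in> B4"
    then have p: "\<tau> permutes W" "\<tau> 4 \<noteq> 4" "\<tau> 1 = 4" "\<tau> 4 \<noteq> 1" by (auto simp: B4_def)
    show "inv (inv \<tau>) = \<tau>" using permutes_inv_inv[OF p(1)] .
    have "inv \<tau> 4 = 1" using permutes_inv_eq[OF p(1)] p(3) by simp
    moreover have "inv \<tau> 4 \<noteq> 4" using permutes_inv_eq[OF p(1)] p(2) by simp
    moreover have "inv \<tau> 1 \<noteq> 4" using permutes_inv_eq[OF p(1)] p(4) by simp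
    ultimately show "inv \<tau> \<in> B5" using permutes_inv[OF p(1)] by (simp add: B5_def)
  qed
  finally show ?thesis using B4_sum by simp
qed

lemma perW': "per W L' = per W L + per (W - {4}) L + per (W - {1,4}) L + 2"
proof -
  let ?f' = "\<lambda>\<sigma>. \<Prod>t\<in>W. L' t (\<sigma> t)"
  let ?f = "\<lambda>\<sigma>. \<Prod>t\<in>W. L t (\<sigma> t)"
  have s1': "sum ?f' B1 = 3 * per (W - {4}) L"
  proof -
    have "sum ?f' B1 = (\<Prod>c\<in>{4}. L' c (id c)) * per (W - {4}) L'"
      unfolding B1_def by (rule sum_cls[OF finW _ permutes_id]) (use k3 in auto)
    then show ?thesis using L'44 per_agree[of "W - {4}"] by simp
  qed
  have s1: "sum ?f B1 = 2 * per (W - {4}) L"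
  proof -
    have "sum ?f B1 = (\<Prod>c\<in>{4}. L c (id c)) * per (W - {4}) L"
      unfolding B1_def by (rule sum_cls[OF finW _ permutes_id]) (use k3 in auto)
    then show ?thesis using L44 by simp
  qed
  have s3': "sum ?f' B3 = per (W - {1,4}) L"
  proof -
    have "sum ?f' B3 = (\<Prod>c\<in>{1,4}. L' c (transpose 1 4 c)) * per (W - {1,4}) L'"
      unfolding B3_def by (rule sum_cls[OF finW _ permutes_swap_id]) (use k3 in auto)
    then show ?thesis using L'_vals per_agree[of "W - {1,4}"] by auto
  qed
  have z: "sum ?f B3 = 0" "sum ?f B4 = 0" "sum ?f B5 = 0"
  proof -
    have W14: "1 \<in> W" "4 \<in> W" using k3 by auto
    show "sum ?f B3 = 0"
      by (rule sum.neutral) (use W14 L_14 in \<open>auto simp: B3_def cls_def prod_zero_iff intro!: bexI[where x=1]\<close>)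
    show "sum ?f B4 = 0"
      by (rule sum.neutral) (use W14 L_14 in \<open>auto simp: B4_def prod_zero_iff intro!: bexI[where x=1]\<close>)
    show "sum ?f B5 = 0"
      by (rule sum.neutral) (use W14 L_14 in \<open>auto simp: B5_def prod_zero_iff intro!: bexI[where x=4]\<close>)
  qed
  have s2: "sum ?f' B2 = sum ?f B2"
  proof (rule sum.cong[OF refl], rule prod.cong[OF refl])
    fix \<sigma> t assume s: "\<sigma> \<in> B2" and t: "t \<in> W"
    then have p: "\<sigma> permutes W" "\<sigma> 4 \<noteq> 4" "\<sigma> 1 \<noteq> 4" "\<sigma> 4 \<noteq> 1" by (auto simp: B2_def)
    have "\<sigma> t \<in> W" using permutes_in_image[OF p(1)] t by simp
    then show "L' t (\<sigma> t) = L t (\<sigma> t)" by (rule agree[OF t]) (use p in auto)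
  qed
  have "per W L = sum ?f B1 + (sum ?f B2 + (sum ?f B3 + (sum ?f B4 + sum ?f B5)))" by (rule partW)
  moreover have "per W L' = sum ?f' B1 + (sum ?f' B2 + (sum ?f' B3 + (sum ?f' B4 + sum ?f' B5)))" by (rule partW)
  ultimately show ?thesis using s1 s1' s2 s3' z B4_sum B5_sum by linarith
qed

lemma main: "per V L' < per V L"
proof -
  have a: "per V L' = 3 * per W L + 4 * per (W - {4}) L + 3 * per (W - {1,4}) L + 6"
    using G'_outer perW' per_agree[of "W - {4}"] by simp
  have b1: "1 \<le> per (W - {4}) L" "1 \<le> per (W - {4,5}) L" "1 \<le> per (W - {1,4}) L" "1 \<le> per (W - {1,4,5}) L"
    by (rule per_L_ge1; auto)+
  show ?thesis using a b1 lowerG leafW leafW1 by linarith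
qed

end

theorem theorem2p6:
  fixes k i j ni nj :: nat
  assumes "k \<ge> 3" and "4 < i" and "i < j" and "j \<le> 2 * k"
  shows "per (G_vertices k ni nj) (laplacian (G_edges k i j ni nj))
       > per (G_vertices k ni nj)
             (laplacian (insert {1, 4} (G_edges k i j ni nj - {{1, 2}})))"
proof -
  interpret gr k i j ni nj using assms by unfold_locales
  show ?thesis using main unfolding G_vertices_def .
qed

end
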